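(* Let $\mathcal A$ be an abelian category and let $0\to F\to M\to C\to 0$ be a fully invariant short exact sequence in $\mathcal A$. (1) $M$ is strongly self-$F$-split if and only if $M$ is self-$F$-split and the ring $\mathrm{End}_{\mathcal A}(C)$ is abelian. (2) $M$ is dual strongly self-$F$-split if and only if $M$ is dual self-$F$-split and the ring $\mathrm{End}_{\mathcal A}(F)$ is abelian.
   Context: A ring is abelian if each of its idempotents is central. Let $\mathcal A$ be an abelian category. A morphism $s:X\to Y$ is a section if $ts=1_X$ for some $t$, and a retraction if $st=1_Y$ for some $t$. A monomorphism $i:K\to M$ is fully invariant if for every morphism $h:M\to M$ there is $\alpha:K\to K$ with $hi=i\alpha$; an epimorphism $d:M\to C$ is fully coinvariant if for every $h:M\to M$ there is $\beta:C\to C$ with $dh=\beta d$. A short exact sequence $0\to F\xrightarrow{i}M\xrightarrow{d}C\to 0$ is fully invariant if $i$ is fully invariant. $M$ is self-$F$-split (resp. strongly self-$F$-split) if for every morphism $g:M\to M$, $\ker(dg)$ is a section (resp. a fully invariant section); $M$ is dual self-$F$-split (resp. dual strongly self-$F$-split) if for every morphism $g:M\to M$, $\mathrm{coker}(gi)$ is a retraction (resp. a fully coinvariant retraction). *)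

theory Defs
  imports Main
begin

text \<open>A (locally small, set-based) category presented by its objects, arrows,
  domain/codomain, composition (cmp g f = g after f) and identities, together with
  a preadditive structure (addition and zero on each hom-set).\<close>

record ('o, 'm) precat =
  Ob   :: "'o set"
  Ar   :: "'m set"
  Dm   :: "'m \<Rightarrow> 'o"
  Cd   :: "'m \<Rightarrow> 'o"
  cmp  :: "'m \<Rightarrow> 'm \<Rightarrow> 'm"
  idm  :: "'o \<Rightarrow> 'm"
  addm :: "'m \<Rightarrow> 'm \<Rightarrow> 'm"
  zerom :: "'o \<Rightarrow> 'o \<Rightarrow> 'm"

definition hom :: "('o, 'm) precat \<Rightarrow> 'o \<Rightarrow> 'o \<Rightarrow> 'm set" where
  "hom A X Y = {f \<in> Ar A. Dm A f = X \<and> Cd A f = Y}"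

definition is_category :: "('o, 'm) precat \<Rightarrow> bool" where
  "is_category A \<longleftrightarrow>
     (\<forall>f\<in>Ar A. Dm A f \<in> Ob A \<and> Cd A f \<in> Ob A) \<and>
     (\<forall>X\<in>Ob A. idm A X \<in> hom A X X) \<and>
     (\<forall>f\<in>Ar A. \<forall>g\<in>Ar A. Cd A f = Dm A g \<longrightarrow> cmp A g f \<in> hom A (Dm A f) (Cd A g)) \<and>
     (\<forall>f\<in>Ar A. cmp A f (idm A (Dm A f)) = f \<and> cmp A (idm A (Cd A f)) f = f) \<and>
     (\<forall>f\<in>Ar A. \<forall>g\<in>Ar A. \<forall>h\<in>Ar A. Cd A f = Dm A g \<and> Cd A g = Dm A h \<longrightarrow>
        cmp A h (cmp A g f) = cmp A (cmp A h g) f)"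

definition is_preadditive :: "('o, 'm) precat \<Rightarrow> bool" where
  "is_preadditive A \<longleftrightarrow>
     (\<forall>X\<in>Ob A. \<forall>Y\<in>Ob A.
        zerom A X Y \<in> hom A X Y \<and>
        (\<forall>f\<in>hom A X Y. \<forall>g\<in>hom A X Y. addm A f g \<in> hom A X Y) \<and>
        (\<forall>f\<in>hom A X Y. \<forall>g\<in>hom A X Y. \<forall>h\<in>hom A X Y.
            addm A (addm A f g) h = addm A f (addm A g h)) \<and>
        (\<forall>f\<in>hom A X Y. \<forall>g\<in>hom A X Y. addm A f g = addm A g f) \<and>
        (\<forall>f\<in>hom A X Y. addm A f (zerom A X Y) = f) \<and>
        (\<forall>f\<in>hom A X Y. \<exists>g\<in>hom A X Y. addm A f g = zerom A X Y)) \<and>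
     (\<forall>X\<in>Ob A. \<forall>Y\<in>Ob A. \<forall>Z\<in>Ob A.
        \<forall>f\<in>hom A X Y. \<forall>g\<in>hom A X Y. \<forall>h\<in>hom A Y Z.
          cmp A h (addm A f g) = addm A (cmp A h f) (cmp A h g)) \<and>
     (\<forall>X\<in>Ob A. \<forall>Y\<in>Ob A. \<forall>Z\<in>Ob A.
        \<forall>f\<in>hom A Y Z. \<forall>g\<in>hom A Y Z. \<forall>h\<in>hom A X Y.
          cmp A (addm A f g) h = addm A (cmp A f h) (cmp A g h))"

definition has_zero_object :: "('o, 'm) precat \<Rightarrow> bool" where
  "has_zero_object A \<longleftrightarrow>
     (\<exists>Z\<in>Ob A. \<forall>X\<in>Ob A. (\<exists>!f. f \<in> hom A Z X) \<and> (\<exists>!f. f \<in> hom A X Z))"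

definition has_biproducts :: "('o, 'm) precat \<Rightarrow> bool" where
  "has_biproducts A \<longleftrightarrow>
     (\<forall>X\<in>Ob A. \<forall>Y\<in>Ob A. \<exists>P\<in>Ob A. \<exists>p1\<in>hom A P X. \<exists>p2\<in>hom A P Y.
        \<exists>i1\<in>hom A X P. \<exists>i2\<in>hom A Y P.
          cmp A p1 i1 = idm A X \<and> cmp A p2 i2 = idm A Y \<and>
          cmp A p1 i2 = zerom A Y X \<and> cmp A p2 i1 = zerom A X Y \<and>
          addm A (cmp A i1 p1) (cmp A i2 p2) = idm A P)"

definition mono :: "('o, 'm) precat \<Rightarrow> 'm \<Rightarrow> bool" where
  "mono A f \<longleftrightarrow> f \<in> Ar A \<and>
     (\<forall>g\<in>Ar A. \<forall>h\<in>Ar A. Cd A g = Dm A f \<and> Cd A h = Dm A f \<and> Dm A g = Dm A h \<and>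
        cmp A f g = cmp A f h \<longrightarrow> g = h)"

definition epi :: "('o, 'm) precat \<Rightarrow> 'm \<Rightarrow> bool" where
  "epi A f \<longleftrightarrow> f \<in> Ar A \<and>
     (\<forall>g\<in>Ar A. \<forall>h\<in>Ar A. Dm A g = Cd A f \<and> Dm A h = Cd A f \<and> Cd A g = Cd A h \<and>
        cmp A g f = cmp A h f \<longrightarrow> g = h)"

definition is_kernel :: "('o, 'm) precat \<Rightarrow> 'm \<Rightarrow> 'm \<Rightarrow> bool" where
  "is_kernel A f k \<longleftrightarrow> f \<in> Ar A \<and> k \<in> Ar A \<and> Cd A k = Dm A f \<and>
     cmp A f k = zerom A (Dm A k) (Cd A f) \<and>
     (\<forall>x\<in>Ar A. Cd A x = Dm A f \<and> cmp A f x = zerom A (Dm A x) (Cd A f) \<longrightarrow>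
        (\<exists>!u. u \<in> hom A (Dm A x) (Dm A k) \<and> cmp A k u = x))"

definition is_cokernel :: "('o, 'm) precat \<Rightarrow> 'm \<Rightarrow> 'm \<Rightarrow> bool" where
  "is_cokernel A f c \<longleftrightarrow> f \<in> Ar A \<and> c \<in> Ar A \<and> Dm A c = Cd A f \<and>
     cmp A c f = zerom A (Dm A f) (Cd A c) \<and>
     (\<forall>x\<in>Ar A. Dm A x = Cd A f \<and> cmp A x f = zerom A (Dm A f) (Cd A x) \<longrightarrow>
        (\<exists>!u. u \<in> hom A (Cd A c) (Cd A x) \<and> cmp A u c = x))"

definition abelian_category :: "('o, 'm) precat \<Rightarrow> bool" where
  "abelian_category A \<longleftrightarrow> is_category A \<and> is_preadditive A \<and>
     has_zero_object A \<and> has_biproducts A \<and>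
     (\<forall>f\<in>Ar A. (\<exists>k. is_kernel A f k) \<and> (\<exists>c. is_cokernel A f c)) \<and>
     (\<forall>m. mono A m \<longrightarrow> (\<exists>g. is_kernel A g m)) \<and>
     (\<forall>e. epi A e \<longrightarrow> (\<exists>g. is_cokernel A g e))"

definition is_section :: "('o, 'm) precat \<Rightarrow> 'm \<Rightarrow> bool" where
  "is_section A s \<longleftrightarrow> s \<in> Ar A \<and>
     (\<exists>t\<in>hom A (Cd A s) (Dm A s). cmp A t s = idm A (Dm A s))"

definition is_retraction :: "('o, 'm) precat \<Rightarrow> 'm \<Rightarrow> bool" where
  "is_retraction A s \<longleftrightarrow> s \<in> Ar A \<and>
     (\<exists>t\<in>hom A (Cd A s) (Dm A s). cmp A s t = idm A (Cd A s))"

definition fully_invariant :: "('o, 'm) precat \<Rightarrow> 'm \<Rightarrow> bool" where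
  "fully_invariant A i \<longleftrightarrow> mono A i \<and>
     (\<forall>h\<in>hom A (Cd A i) (Cd A i). \<exists>\<alpha>\<in>hom A (Dm A i) (Dm A i). cmp A h i = cmp A i \<alpha>)"

definition fully_coinvariant :: "('o, 'm) precat \<Rightarrow> 'm \<Rightarrow> bool" where
  "fully_coinvariant A d \<longleftrightarrow> epi A d \<and>
     (\<forall>h\<in>hom A (Dm A d) (Dm A d). \<exists>\<beta>\<in>hom A (Cd A d) (Cd A d). cmp A d h = cmp A \<beta> d)"

text \<open>0 \<rightarrow> F --i--> M --d--> C \<rightarrow> 0 is short exact\<close>
definition short_exact :: "('o, 'm) precat \<Rightarrow> 'm \<Rightarrow> 'm \<Rightarrow> bool" where
  "short_exact A i d \<longleftrightarrow> mono A i \<and> epi A d \<and> Cd A i = Dm A d \<and>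
     is_kernel A d i \<and> is_cokernel A i d"

definition fully_invariant_ses :: "('o, 'm) precat \<Rightarrow> 'm \<Rightarrow> 'm \<Rightarrow> bool" where
  "fully_invariant_ses A i d \<longleftrightarrow> short_exact A i d \<and> fully_invariant A i"

definition abelian_End :: "('o, 'm) precat \<Rightarrow> 'o \<Rightarrow> bool" where
  "abelian_End A X \<longleftrightarrow>
     (\<forall>e\<in>hom A X X. cmp A e e = e \<longrightarrow> (\<forall>f\<in>hom A X X. cmp A e f = cmp A f e))"

definition self_F_split :: "('o, 'm) precat \<Rightarrow> 'm \<Rightarrow> 'm \<Rightarrow> bool" where
  "self_F_split A i d \<longleftrightarrow>
     (\<forall>g\<in>hom A (Cd A i) (Cd A i). \<forall>k. is_kernel A (cmp A d g) k \<longrightarrow> is_section A k)"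

definition strongly_self_F_split :: "('o, 'm) precat \<Rightarrow> 'm \<Rightarrow> 'm \<Rightarrow> bool" where
  "strongly_self_F_split A i d \<longleftrightarrow>
     (\<forall>g\<in>hom A (Cd A i) (Cd A i). \<forall>k. is_kernel A (cmp A d g) k \<longrightarrow>
        is_section A k \<and> fully_invariant A k)"

definition dual_self_F_split :: "('o, 'm) precat \<Rightarrow> 'm \<Rightarrow> 'm \<Rightarrow> bool" where
  "dual_self_F_split A i d \<longleftrightarrow>
     (\<forall>g\<in>hom A (Cd A i) (Cd A i). \<forall>c. is_cokernel A (cmp A g i) c \<longrightarrow> is_retraction A c)"

definition dual_strongly_self_F_split :: "('o, 'm) precat \<Rightarrow> 'm \<Rightarrow> 'm \<Rightarrow> bool" where
  "dual_strongly_self_F_split A i d \<longleftrightarrow>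
     (\<forall>g\<in>hom A (Cd A i) (Cd A i). \<forall>c. is_cokernel A (cmp A g i) c \<longrightarrow>
        is_retraction A c \<and> fully_coinvariant A c)"

end

theory Submission
  imports Defs
begin

locale pc =
  fixes A :: "('o,'m) precat"
  assumes cat: "is_category A" and pre: "is_preadditive A"
begin

abbreviation cc (infixr "\<cdot>" 55) where "g \<cdot> f \<equiv> cmp A g f"

lemma hom_iff: "f \<in> hom A X Y \<longleftrightarrow> f \<in> Ar A \<and> Dm A f = X \<and> Cd A f = Y"
  by (simp add: hom_def)

lemma Ar_Ob: "f \<in> Ar A \<Longrightarrow> Dm A f \<in> Ob A \<and> Cd A f \<in> Ob A"
  using cat by (simp add: is_category_def)

lemma hom_Ob: "f \<in> hom A X Y \<Longrightarrow> X \<in> Ob A \<and> Y \<in> Ob A"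
  using Ar_Ob by (auto simp: hom_def)

lemma id_hom: "X \<in> Ob A \<Longrightarrow> idm A X \<in> hom A X X"
  using cat by (simp add: is_category_def)

lemma comp_hom: "f \<in> hom A X Y \<Longrightarrow> g \<in> hom A Y Z \<Longrightarrow> cmp A g f \<in> hom A X Z"
  using cat unfolding is_category_def hom_def by auto

lemma comp_Ar: "f \<in> Ar A \<Longrightarrow> g \<in> Ar A \<Longrightarrow> Cd A f = Dm A g \<Longrightarrow> cmp A g f \<in> Ar A"
  using comp_hom[of f "Dm A f" "Cd A f" g "Cd A g"] by (simp add: hom_def)
lemma Dm_comp: "f \<in> Ar A \<Longrightarrow> g \<in> Ar A \<Longrightarrow> Cd A f = Dm A g \<Longrightarrow> Dm A (cmp A g f) = Dm A f"
  using comp_hom[of f "Dm A f" "Cd A f" g "Cd A g"] by (simp add: hom_def)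
lemma Cd_comp: "f \<in> Ar A \<Longrightarrow> g \<in> Ar A \<Longrightarrow> Cd A f = Dm A g \<Longrightarrow> Cd A (cmp A g f) = Cd A g"
  using comp_hom[of f "Dm A f" "Cd A f" g "Cd A g"] by (simp add: hom_def)

lemma assoc: "f \<in> Ar A \<Longrightarrow> g \<in> Ar A \<Longrightarrow> h \<in> Ar A \<Longrightarrow> Cd A f = Dm A g \<Longrightarrow> Cd A g = Dm A h \<Longrightarrow>
   cmp A (cmp A h g) f = cmp A h (cmp A g f)"
  using cat unfolding is_category_def by metis

lemma assoc_h: "f \<in> hom A X Y \<Longrightarrow> g \<in> hom A Y Z \<Longrightarrow> h \<in> hom A Z W \<Longrightarrow>
   cmp A h (cmp A g f) = cmp A (cmp A h g) f"
  using assoc by (simp add: hom_def)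

lemma id_left: "f \<in> hom A X Y \<Longrightarrow> cmp A (idm A Y) f = f"
  using cat unfolding is_category_def hom_def by auto
lemma id_right: "f \<in> hom A X Y \<Longrightarrow> cmp A f (idm A X) = f"
  using cat unfolding is_category_def hom_def by auto

lemma zero_hom: "X \<in> Ob A \<Longrightarrow> Y \<in> Ob A \<Longrightarrow> zerom A X Y \<in> hom A X Y"
  using pre unfolding is_preadditive_def by blast
lemma pre1: assumes "X \<in> Ob A" "Y \<in> Ob A" shows "zerom A X Y \<in> hom A X Y \<and>
        (\<forall>f\<in>hom A X Y. \<forall>g\<in>hom A X Y. addm A f g \<in> hom A X Y) \<and>
        (\<forall>f\<in>hom A X Y. \<forall>g\<in>hom A X Y. \<forall>h\<in>hom A X Y.
            addm A (addm A f g) h = addm A f (addm A g h)) \<and>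
        (\<forall>f\<in>hom A X Y. \<forall>g\<in>hom A X Y. addm A f g = addm A g f) \<and>
        (\<forall>f\<in>hom A X Y. addm A f (zerom A X Y) = f) \<and>
        (\<forall>f\<in>hom A X Y. \<exists>g\<in>hom A X Y. addm A f g = zerom A X Y)"
  using conjunct1[OF pre[unfolded is_preadditive_def]] assms by (elim ballE) auto
lemma add_hom: assumes "f \<in> hom A X Y" "g \<in> hom A X Y" shows "addm A f g \<in> hom A X Y"
  using pre1[OF conjunct1[OF hom_Ob[OF assms(1)]] conjunct2[OF hom_Ob[OF assms(1)]]] assms by blast
lemma add_assoc: assumes "f \<in> hom A X Y" "g \<in> hom A X Y" "h \<in> hom A X Y" shows
   "addm A (addm A f g) h = addm A f (addm A g h)"
  using pre1[OF conjunct1[OF hom_Ob[OF assms(1)]] conjunct2[OF hom_Ob[OF assms(1)]]] assms by blast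
lemma add_comm: assumes "f \<in> hom A X Y" "g \<in> hom A X Y" shows "addm A f g = addm A g f"
  using pre1[OF conjunct1[OF hom_Ob[OF assms(1)]] conjunct2[OF hom_Ob[OF assms(1)]]] assms by blast
lemma add_zero: assumes "f \<in> hom A X Y" shows "addm A f (zerom A X Y) = f"
  using pre1[OF conjunct1[OF hom_Ob[OF assms(1)]] conjunct2[OF hom_Ob[OF assms(1)]]] assms by blast
lemma zero_add: "f \<in> hom A X Y \<Longrightarrow> addm A (zerom A X Y) f = f"
  using add_zero add_comm zero_hom hom_Ob by metis
lemma neg: assumes "f \<in> hom A X Y" shows "\<exists>g\<in>hom A X Y. addm A f g = zerom A X Y"
  using pre1[OF conjunct1[OF hom_Ob[OF assms(1)]] conjunct2[OF hom_Ob[OF assms(1)]]] assms by blast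
lemma distl: assumes "f \<in> hom A X Y" "g \<in> hom A X Y" "h \<in> hom A Y Z" shows
   "cmp A h (addm A f g) = addm A (cmp A h f) (cmp A h g)"
  using pre hom_Ob[OF assms(1)] hom_Ob[OF assms(3)] assms unfolding is_preadditive_def by blast
lemma distr: assumes "f \<in> hom A Y Z" "g \<in> hom A Y Z" "h \<in> hom A X Y" shows
   "cmp A (addm A f g) h = addm A (cmp A f h) (cmp A g h)"
  using pre hom_Ob[OF assms(1)] hom_Ob[OF assms(3)] assms unfolding is_preadditive_def by blast

lemma selfadd_zero: assumes "x \<in> hom A X Y" "addm A x x = x" shows "x = zerom A X Y"
proof -
  obtain y where y: "y \<in> hom A X Y" "addm A x y = zerom A X Y" using neg assms by blast
  have "x = addm A x (addm A x y)" using y add_zero assms by simp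
  also have "\<dots> = addm A (addm A x x) y" using add_assoc assms y by metis
  also have "\<dots> = zerom A X Y" using y assms by simp
  finally show ?thesis .
qed

lemma comp_zero: assumes "f \<in> hom A Y Z" "X \<in> Ob A" shows "cmp A f (zerom A X Y) = zerom A X Z"
proof -
  have Y: "Y \<in> Ob A" using assms hom_Ob by blast
  have z: "zerom A X Y \<in> hom A X Y" using zero_hom assms Y by blast
  have "cmp A f (zerom A X Y) = cmp A f (addm A (zerom A X Y) (zerom A X Y))"
    using add_zero z by simp
  also have "\<dots> = addm A (cmp A f (zerom A X Y)) (cmp A f (zerom A X Y))"
    using distl z assms by blast
  finally show ?thesis using selfadd_zero comp_hom z assms by metis
qed

lemma zero_comp: assumes "f \<in> hom A X Y" "Z \<in> Ob A" shows "cmp A (zerom A Y Z) f = zerom A X Z"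
proof -
  have Y: "Y \<in> Ob A" using assms hom_Ob by blast
  have z: "zerom A Y Z \<in> hom A Y Z" using zero_hom assms Y by blast
  have "cmp A (zerom A Y Z) f = cmp A (addm A (zerom A Y Z) (zerom A Y Z)) f"
    using add_zero z by simp
  also have "\<dots> = addm A (cmp A (zerom A Y Z) f) (cmp A (zerom A Y Z) f)"
    using distr z assms by blast
  finally show ?thesis using selfadd_zero comp_hom z assms by metis
qed

lemma idem_compl:
  assumes e: "e \<in> hom A X X" and ee: "cmp A e e = e"
  shows "\<exists>e'\<in>hom A X X. addm A e e' = idm A X \<and> cmp A e e' = zerom A X X \<and>
           cmp A e' e = zerom A X X \<and> cmp A e' e' = e'"
proof -
  have X: "X \<in> Ob A" using e hom_Ob by blast
  have I: "idm A X \<in> hom A X X" using id_hom X by blast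
  have Z: "zerom A X X \<in> hom A X X" using zero_hom X by blast
  obtain n where n: "n \<in> hom A X X" "addm A e n = zerom A X X" using neg e by blast
  define e' where "e' = addm A (idm A X) n"
  have e'h: "e' \<in> hom A X X" using e'_def add_hom I n by blast
  have s: "addm A e e' = idm A X"
  proof -
    have "addm A e e' = addm A (addm A e (idm A X)) n" using add_assoc e I n e'_def by metis
    also have "\<dots> = addm A (addm A (idm A X) e) n" using add_comm e I by metis
    also have "\<dots> = addm A (idm A X) (addm A e n)" using add_assoc e I n by metis
    finally show ?thesis using n add_zero I by simp
  qed
  have en: "addm A e (cmp A e n) = zerom A X X"
  proof -
    have "cmp A e (addm A e n) = zerom A X X" using n comp_zero e X by simp
    thus ?thesis using distl e n ee by metis
  qed
  have ne: "addm A e (cmp A n e) = zerom A X X"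
  proof -
    have "cmp A (addm A e n) e = zerom A X X" using n zero_comp e X by simp
    thus ?thesis using distr e n ee by metis
  qed
  have 1: "cmp A e e' = zerom A X X"
    unfolding e'_def using distl[OF I n(1) e] id_right e en by metis
  have 2: "cmp A e' e = zerom A X X"
    unfolding e'_def using distr[OF I n(1) e] id_left e ne by metis
  have "cmp A e' (addm A e n) = zerom A X X" using n comp_zero e'h X by simp
  hence "addm A (cmp A e' e) (cmp A e' n) = zerom A X X" using distl e n e'h by metis
  hence e'n: "cmp A e' n = zerom A X X" using 2 zero_add comp_hom n e'h by metis
  have 3: "cmp A e' e' = e'"
  proof -
    have "cmp A e' e' = addm A (cmp A e' (idm A X)) (cmp A e' n)"
      unfolding e'_def[symmetric] using distl[OF I n(1) e'h] e'_def by metis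
    thus ?thesis using e'n id_right e'h add_zero by metis
  qed
  show ?thesis using e'h s 1 2 3 by blast
qed

lemma central:
  assumes e: "e \<in> hom A X X" and e': "e' \<in> hom A X X" and f: "f \<in> hom A X X"
    and s: "addm A e e' = idm A X" and ee: "cmp A e e = e"
    and 1: "cmp A e (cmp A f e') = zerom A X X" and 2: "cmp A e' (cmp A f e) = zerom A X X"
  shows "cmp A e f = cmp A f e"
proof -
  have X: "X \<in> Ob A" using e hom_Ob by blast
  have ef: "cmp A e f \<in> hom A X X" "cmp A f e \<in> hom A X X" using comp_hom e f by blast+
  have "cmp A e f = cmp A (cmp A e f) (addm A e e')" using s id_right ef by metis
  also have "\<dots> = addm A (cmp A (cmp A e f) e) (cmp A (cmp A e f) e')" using distl e e' ef by blast
  also have "cmp A (cmp A e f) e' = zerom A X X" using 1 assoc e e' f hom_iff by metis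
  finally have a: "cmp A e f = cmp A (cmp A e f) e" using add_zero comp_hom ef e by metis
  have "cmp A f e = cmp A (addm A e e') (cmp A f e)" using s id_left ef by metis
  also have "\<dots> = addm A (cmp A e (cmp A f e)) (cmp A e' (cmp A f e))" using distr e e' ef by blast
  finally have b: "cmp A f e = cmp A e (cmp A f e)" using 2 add_zero comp_hom ef e by metis
  show ?thesis using a b assoc e f hom_iff by metis
qed


lemma ker_hom: "is_kernel A f k \<Longrightarrow> k \<in> hom A (Dm A k) (Dm A f) \<and> cmp A f k = zerom A (Dm A k) (Cd A f)"
  by (simp add: is_kernel_def hom_def)
lemma coker_hom: "is_cokernel A f c \<Longrightarrow> c \<in> hom A (Cd A f) (Cd A c) \<and> cmp A c f = zerom A (Dm A f) (Cd A c)"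
  by (simp add: is_cokernel_def hom_def)
lemma ker_factor: assumes "is_kernel A f k" "x \<in> hom A W (Dm A f)" "cmp A f x = zerom A W (Cd A f)"
  shows "\<exists>u\<in>hom A W (Dm A k). cmp A k u = x"
proof -
  have U: "\<forall>x\<in>Ar A. Cd A x = Dm A f \<and> cmp A f x = zerom A (Dm A x) (Cd A f) \<longrightarrow>
        (\<exists>!u. u \<in> hom A (Dm A x) (Dm A k) \<and> cmp A k u = x)"
    using assms(1) unfolding is_kernel_def by blast
  have x: "x \<in> Ar A" "Cd A x = Dm A f" "Dm A x = W" using assms(2) unfolding hom_def by auto
  have "\<exists>!u. u \<in> hom A (Dm A x) (Dm A k) \<and> cmp A k u = x"
    using U[rule_format, OF x(1)] x assms(3) by simp
  thus ?thesis using x by blast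
qed
lemma coker_factor: assumes "is_cokernel A f c" "x \<in> hom A (Cd A f) W" "cmp A x f = zerom A (Dm A f) W"
  shows "\<exists>u\<in>hom A (Cd A c) W. cmp A u c = x"
proof -
  have U: "\<forall>x\<in>Ar A. Dm A x = Cd A f \<and> cmp A x f = zerom A (Dm A f) (Cd A x) \<longrightarrow>
        (\<exists>!u. u \<in> hom A (Cd A c) (Cd A x) \<and> cmp A u c = x)"
    using assms(1) unfolding is_cokernel_def by blast
  have x: "x \<in> Ar A" "Dm A x = Cd A f" "Cd A x = W" using assms(2) unfolding hom_def by auto
  have "\<exists>!u. u \<in> hom A (Cd A c) (Cd A x) \<and> cmp A u c = x"
    using U[rule_format, OF x(1)] x assms(3) by simp
  thus ?thesis using x by blast
qed
lemma epi_cancel: "epi A d \<Longrightarrow> g \<in> hom A (Cd A d) Z \<Longrightarrow> h \<in> hom A (Cd A d) Z \<Longrightarrow> cmp A g d = cmp A h d \<Longrightarrow> g = h"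
  unfolding epi_def hom_def by auto
lemma mono_cancel: "mono A m \<Longrightarrow> g \<in> hom A W (Dm A m) \<Longrightarrow> h \<in> hom A W (Dm A m) \<Longrightarrow> cmp A m g = cmp A m h \<Longrightarrow> g = h"
  unfolding mono_def hom_def by auto

lemma ker_mono: assumes k: "is_kernel A f k" shows "mono A k"
  unfolding mono_def
proof (intro conjI ballI impI)
  show "k \<in> Ar A" using k by (simp add: is_kernel_def)
  fix g h assume g: "g \<in> Ar A" and h: "h \<in> Ar A" and c: "Cd A g = Dm A k \<and> Cd A h = Dm A k \<and> Dm A g = Dm A h \<and> cmp A k g = cmp A k h"
  have kh: "k \<in> hom A (Dm A k) (Dm A f)" "cmp A f k = zerom A (Dm A k) (Cd A f)" using ker_hom k by blast+
  have f: "f \<in> hom A (Dm A f) (Cd A f)" using k by (simp add: is_kernel_def hom_def)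
  have Ob: "Cd A f \<in> Ob A" using hom_Ob f by blast
  have gg: "g \<in> hom A (Dm A g) (Dm A k)" "h \<in> hom A (Dm A g) (Dm A k)" using g h c by (auto simp: hom_def)
  have x: "cmp A k g \<in> hom A (Dm A g) (Dm A f)" using comp_hom[OF gg(1) kh(1)] .
  have "cmp A f (cmp A k g) = cmp A (cmp A f k) g" using assoc[of g k f] gg kh f by (simp add: hom_def)
  also have "\<dots> = zerom A (Dm A g) (Cd A f)" using kh(2) zero_comp[OF gg(1) Ob] by simp
  finally have z: "cmp A f (cmp A k g) = zerom A (Dm A g) (Cd A f)" .
  have U: "\<forall>x\<in>Ar A. Cd A x = Dm A f \<and> cmp A f x = zerom A (Dm A x) (Cd A f) \<longrightarrow>
        (\<exists>!u. u \<in> hom A (Dm A x) (Dm A k) \<and> cmp A k u = x)"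
    using k unfolding is_kernel_def by blast
  have "\<exists>!u. u \<in> hom A (Dm A (cmp A k g)) (Dm A k) \<and> cmp A k u = cmp A k g"
    using U[rule_format, of "cmp A k g"] x z by (simp add: hom_def)
  moreover have "Dm A (cmp A k g) = Dm A g" using x by (simp add: hom_def)
  ultimately show "g = h" using gg c by auto
qed

lemma coker_epi: assumes k: "is_cokernel A f c" shows "epi A c"
  unfolding epi_def
proof (intro conjI ballI impI)
  show "c \<in> Ar A" using k by (simp add: is_cokernel_def)
  fix g h assume g: "g \<in> Ar A" and h: "h \<in> Ar A" and c: "Dm A g = Cd A c \<and> Dm A h = Cd A c \<and> Cd A g = Cd A h \<and> cmp A g c = cmp A h c"
  have kh: "c \<in> hom A (Cd A f) (Cd A c)" "cmp A c f = zerom A (Dm A f) (Cd A c)" using coker_hom k by blast+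
  have f: "f \<in> hom A (Dm A f) (Cd A f)" using k by (simp add: is_cokernel_def hom_def)
  have Ob: "Dm A f \<in> Ob A" using hom_Ob f by blast
  have gg: "g \<in> hom A (Cd A c) (Cd A g)" "h \<in> hom A (Cd A c) (Cd A g)" using g h c by (auto simp: hom_def)
  have x: "cmp A g c \<in> hom A (Cd A f) (Cd A g)" using comp_hom[OF kh(1) gg(1)] .
  have "cmp A (cmp A g c) f = cmp A g (cmp A c f)" using assoc[of f c g] gg kh f by (simp add: hom_def)
  also have "\<dots> = zerom A (Dm A f) (Cd A g)" using kh(2) comp_zero[OF gg(1) Ob] by simp
  finally have z: "cmp A (cmp A g c) f = zerom A (Dm A f) (Cd A g)" .
  have U: "\<forall>x\<in>Ar A. Dm A x = Cd A f \<and> cmp A x f = zerom A (Dm A f) (Cd A x) \<longrightarrow>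
        (\<exists>!u. u \<in> hom A (Cd A c) (Cd A x) \<and> cmp A u c = x)"
    using k unfolding is_cokernel_def by blast
  have "\<exists>!u. u \<in> hom A (Cd A c) (Cd A (cmp A g c)) \<and> cmp A u c = cmp A g c"
    using U[rule_format, of "cmp A g c"] x z by (simp add: hom_def)
  moreover have "Cd A (cmp A g c) = Cd A g" using x by (simp add: hom_def)
  ultimately show "g = h" using gg c by auto
qed

lemma ds_cancel: assumes "cmp A d s = idm A C" "s \<in> hom A C M" "d \<in> hom A M C" "X \<in> hom A W C" shows
  "d \<cdot> s \<cdot> X = X"
  using assoc_h[OF assms(4) assms(2) assms(3)] id_left[OF assms(4)] assms(1) by simp

lemma key1:
  assumes ep: "epi A d" and dh: "d \<in> hom A M C" and sh: "s \<in> hom A C M" and ds: "cmp A d s = idm A C"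
    and H: "\<forall>g\<in>hom A M M. \<forall>k. is_kernel A (cmp A d g) k \<longrightarrow> fully_invariant A k"
    and KE: "\<forall>f\<in>Ar A. \<exists>k. is_kernel A f k"
    and a: "a \<in> hom A C C" and b: "b \<in> hom A C C" and f: "f \<in> hom A C C"
    and ab: "cmp A a b = zerom A C C"
  shows "a \<cdot> f \<cdot> b = zerom A C C"
proof -
  have Ob: "M \<in> Ob A" "C \<in> Ob A" using hom_Ob dh by auto
  have ad: "a \<cdot> d \<in> hom A M C" using comp_hom dh a by blast
  define g where "g = s \<cdot> a \<cdot> d"
  have gh: "g \<in> hom A M M" unfolding g_def using comp_hom ad sh by blast
  have dg: "d \<cdot> g = a \<cdot> d" unfolding g_def using ds_cancel[OF ds sh dh ad] .
  have adA: "a \<cdot> d \<in> Ar A" using ad by (simp add: hom_def)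
  obtain k where k: "is_kernel A (a \<cdot> d) k" using KE adA by blast
  define K where "K = Dm A k"
  have kh: "k \<in> hom A K M" "(a \<cdot> d) \<cdot> k = zerom A K C" using ker_hom[OF k] ad unfolding K_def by (auto simp: hom_def)
  have fi: "fully_invariant A k" using H[rule_format, OF gh, of k] k dg by simp
  define h where "h = s \<cdot> f \<cdot> d"
  have fd: "f \<cdot> d \<in> hom A M C" using comp_hom dh f by blast
  have hh: "h \<in> hom A M M" unfolding h_def using comp_hom fd sh by blast
  have Cdk: "Cd A k = M" using kh by (simp add: hom_def)
  obtain \<alpha> where al: "\<alpha> \<in> hom A K K" "h \<cdot> k = k \<cdot> \<alpha>"
    using fi hh Cdk unfolding fully_invariant_def K_def by auto
  have sb: "s \<cdot> b \<in> hom A C M" using comp_hom b sh by blast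
  have "(a \<cdot> d) \<cdot> s \<cdot> b = a \<cdot> d \<cdot> s \<cdot> b" using assoc_h[OF sb dh a] by simp
  also have "\<dots> = zerom A C C" using ds_cancel[OF ds sh dh b] ab by simp
  finally obtain u where u: "u \<in> hom A C K" "k \<cdot> u = s \<cdot> b"
    using ker_factor[OF k, of "s \<cdot> b" C] sb ad unfolding K_def by (auto simp: hom_def)
  have ku: "k \<cdot> u \<in> hom A C M" using comp_hom u kh by blast
  have dku: "d \<cdot> k \<cdot> u \<in> hom A C C" using comp_hom ku dh by blast
  have fdku: "f \<cdot> d \<cdot> k \<cdot> u \<in> hom A C C" using comp_hom dku f by blast
  have au: "\<alpha> \<cdot> u \<in> hom A C K" using comp_hom u al by blast
  have "a \<cdot> f \<cdot> b = a \<cdot> f \<cdot> d \<cdot> s \<cdot> b" using ds_cancel[OF ds sh dh b] by simp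
  also have "\<dots> = a \<cdot> f \<cdot> d \<cdot> k \<cdot> u" using u by simp
  also have "\<dots> = a \<cdot> d \<cdot> s \<cdot> f \<cdot> d \<cdot> k \<cdot> u" using ds_cancel[OF ds sh dh fdku] by simp
  also have "\<dots> = a \<cdot> d \<cdot> h \<cdot> k \<cdot> u"
  proof -
    have "h \<cdot> k \<cdot> u = s \<cdot> (f \<cdot> d) \<cdot> k \<cdot> u" unfolding h_def using assoc_h[OF ku fd sh] by simp
    also have "\<dots> = s \<cdot> f \<cdot> d \<cdot> k \<cdot> u" using assoc_h[OF ku dh f] by simp
    finally show ?thesis by simp
  qed
  also have "\<dots> = a \<cdot> d \<cdot> k \<cdot> \<alpha> \<cdot> u"
  proof -
    have "h \<cdot> k \<cdot> u = k \<cdot> \<alpha> \<cdot> u" using assoc_h[OF u(1) kh(1) hh] assoc_h[OF u(1) al(1) kh(1)] al(2) by simp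
    thus ?thesis by simp
  qed
  also have "\<dots> = ((a \<cdot> d) \<cdot> k) \<cdot> \<alpha> \<cdot> u"
  proof -
    have "a \<cdot> d \<cdot> k \<cdot> \<alpha> \<cdot> u = a \<cdot> (d \<cdot> k) \<cdot> \<alpha> \<cdot> u" using assoc_h[OF au kh(1) dh] by simp
    also have "\<dots> = (a \<cdot> d \<cdot> k) \<cdot> \<alpha> \<cdot> u" using assoc_h[OF au comp_hom[OF kh(1) dh] a] by simp
    also have "\<dots> = ((a \<cdot> d) \<cdot> k) \<cdot> \<alpha> \<cdot> u" using assoc_h[OF kh(1) dh a] by simp
    finally show ?thesis .
  qed
  also have "\<dots> = zerom A C C" using kh(2) zero_comp[OF au Ob(2)] by simp
  finally show ?thesis .
qed

lemmas AS = hom_def assoc comp_Ar Dm_comp Cd_comp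

lemma ext_eq: assumes "x \<cdot> y = z \<cdot> w" "y \<in> hom A X Y" "x \<in> hom A Y Z" "w \<in> hom A X Y'" "z \<in> hom A Y' Z"
  shows "R \<in> Ar A \<Longrightarrow> Cd A R = X \<Longrightarrow> x \<cdot> (y \<cdot> R) = z \<cdot> (w \<cdot> R)"
proof -
  assume R: "R \<in> Ar A" "Cd A R = X"
  have "x \<cdot> (y \<cdot> R) = (x \<cdot> y) \<cdot> R" using R assms(2-5) by (simp add: AS)
  also have "\<dots> = (z \<cdot> w) \<cdot> R" using assms by simp
  also have "\<dots> = z \<cdot> (w \<cdot> R)" using R assms(2-5) by (simp add: AS)
  finally show ?thesis .
qed

lemma ext_id: assumes "x \<cdot> y = idm A X" "y \<in> hom A X Y" "x \<in> hom A Y X"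
  shows "R \<in> Ar A \<Longrightarrow> Cd A R = X \<Longrightarrow> x \<cdot> (y \<cdot> R) = R"
proof -
  assume R: "R \<in> Ar A" "Cd A R = X"
  have "x \<cdot> (y \<cdot> R) = (x \<cdot> y) \<cdot> R" using R assms(2-3) by (simp add: AS)
  also have "\<dots> = R" using assms id_left[of R "Dm A R" X] R by (simp add: hom_def)
  finally show ?thesis .
qed

lemma conv1:
  assumes dh: "d \<in> hom A M C" and ep: "epi A d"
    and L: "\<forall>h\<in>hom A M M. \<exists>hb\<in>hom A C C. d \<cdot> h = hb \<cdot> d"
    and ab: "abelian_End A C" and gh: "g \<in> hom A M M"
    and k: "is_kernel A (d \<cdot> g) k" and sec: "is_section A k"
  shows "fully_invariant A k"
proof -
  have Ob: "M \<in> Ob A" "C \<in> Ob A" using hom_Ob dh by auto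
  have dg: "d \<cdot> g \<in> hom A M C" using comp_hom gh dh by blast
  define K where "K = Dm A k"
  have kh: "k \<in> hom A K M" "(d \<cdot> g) \<cdot> k = zerom A K C" using ker_hom[OF k] dg unfolding K_def by (auto simp: hom_def)
  have CdE: "Cd A d = C" using dh by (simp add: hom_def)
  obtain t where t: "t \<in> hom A M K" "t \<cdot> k = idm A K" using sec kh unfolding is_section_def K_def by (auto simp: hom_def)
  have KOb: "K \<in> Ob A" using hom_Ob kh by blast
  show ?thesis unfolding fully_invariant_def
  proof (intro conjI ballI)
    show "mono A k" using ker_mono k .
    fix h assume "h \<in> hom A (Cd A k) (Cd A k)"
    hence hh: "h \<in> hom A M M" using kh by (simp add: hom_def)
    define p where "p = k \<cdot> t"
    have ph: "p \<in> hom A M M" unfolding p_def using comp_hom t kh by blast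
    obtain pb where pb: "pb \<in> hom A C C" "d \<cdot> p = pb \<cdot> d" using L ph by blast
    obtain gb where gb: "gb \<in> hom A C C" "d \<cdot> g = gb \<cdot> d" using L gh by blast
    obtain hb where hb: "hb \<in> hom A C C" "d \<cdot> h = hb \<cdot> d" using L hh by blast
    have pp: "p \<cdot> p = p"
    proof -
      have "p \<cdot> p = k \<cdot> ((t \<cdot> k) \<cdot> t)" unfolding p_def using t(1) kh(1) by (simp add: AS)
      thus ?thesis using t id_left[OF t(1)] p_def by simp
    qed
    note E1 = ext_eq[OF pb(2)[symmetric] dh pb(1) ph dh]
    note E2 = ext_eq[OF gb(2) gh dh dh gb(1)]
    note E3 = ext_eq[OF hb(2) hh dh dh hb(1)]
    note E4 = ext_id[OF t(2) kh(1) t(1)]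
    have "(pb \<cdot> pb) \<cdot> d = d \<cdot> (p \<cdot> p)" using pb(1) dh ph by (simp add: AS E1 pb(2)[symmetric])
    hence "(pb \<cdot> pb) \<cdot> d = pb \<cdot> d" using pp pb by simp
    hence pbb: "pb \<cdot> pb = pb" using epi_cancel[OF ep] comp_hom pb CdE by metis
    have "(gb \<cdot> pb) \<cdot> d = ((d \<cdot> g) \<cdot> k) \<cdot> t"
      using pb(1) gb(1) dh gh kh(1) t(1) ph by (simp add: AS E1 pb(2)[symmetric] E2 p_def)
    also have "\<dots> = zerom A M C" using kh zero_comp[OF t(1) Ob(2)] by simp
    also have "\<dots> = zerom A C C \<cdot> d" using zero_comp[OF dh Ob(2)] by simp
    finally have "(gb \<cdot> pb) \<cdot> d = zerom A C C \<cdot> d" .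
    hence gp: "gb \<cdot> pb = zerom A C C" using epi_cancel[OF ep] comp_hom pb gb CdE zero_hom Ob by metis
    have dk: "pb \<cdot> d \<cdot> k = d \<cdot> k"
      using pb(1) dh kh(1) t(1) ph by (simp add: AS E1 p_def E4 t(2) id_right[OF kh(1)])
    have cen: "pb \<cdot> hb = hb \<cdot> pb" using ab pb hb pbb unfolding abelian_End_def by blast
    note E5 = ext_eq[OF cen[symmetric] pb(1) hb(1) hb(1) pb(1)]
    have dkh: "d \<cdot> k \<in> hom A K C" using comp_hom kh dh by blast
    have "(d \<cdot> g) \<cdot> h \<cdot> k = gb \<cdot> hb \<cdot> d \<cdot> k" using gb(1) hb(1) dh gh hh kh(1) by (simp add: AS E2 E3)
    also have "\<dots> = gb \<cdot> hb \<cdot> pb \<cdot> d \<cdot> k" by (simp only: dk)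
    also have "\<dots> = (gb \<cdot> pb) \<cdot> hb \<cdot> d \<cdot> k" using gb(1) hb(1) pb(1) dkh by (simp add: AS E5)
    also have "\<dots> = zerom A K C" using gp zero_comp[OF comp_hom[OF dkh hb(1)] Ob(2)] by simp
    finally have z: "(d \<cdot> g) \<cdot> h \<cdot> k = zerom A K C" .
    have hk: "h \<cdot> k \<in> hom A K (Dm A (d \<cdot> g))" using comp_hom kh hh dg by (simp add: hom_def)
    obtain \<alpha> where "\<alpha> \<in> hom A K (Dm A k)" "k \<cdot> \<alpha> = h \<cdot> k"
      using ker_factor[OF k hk] z dg by (auto simp: hom_def)
    thus "\<exists>\<alpha>\<in>hom A (Dm A k) (Dm A k). h \<cdot> k = k \<cdot> \<alpha>" unfolding K_def by metis
  qed
qed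

lemma conv2:
  assumes ih: "i \<in> hom A F M" and mi: "mono A i"
    and FI: "\<forall>h\<in>hom A M M. \<exists>\<alpha>\<in>hom A F F. h \<cdot> i = i \<cdot> \<alpha>"
    and ab: "abelian_End A F" and gh: "g \<in> hom A M M"
    and c: "is_cokernel A (g \<cdot> i) c" and ret: "is_retraction A c"
  shows "fully_coinvariant A c"
proof -
  have Ob: "M \<in> Ob A" "F \<in> Ob A" using hom_Ob ih by auto
  have gi: "g \<cdot> i \<in> hom A F M" using comp_hom gh ih by blast
  define Q where "Q = Cd A c"
  have ch: "c \<in> hom A M Q" "c \<cdot> (g \<cdot> i) = zerom A F Q" using coker_hom[OF c] gi unfolding Q_def by (auto simp: hom_def)
  obtain t where t: "t \<in> hom A Q M" "c \<cdot> t = idm A Q" using ret ch unfolding is_retraction_def Q_def by (auto simp: hom_def)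
  have QOb: "Q \<in> Ob A" using hom_Ob ch by blast
  note Ect = ext_id[OF t(2) t(1) ch(1)]
  show ?thesis unfolding fully_coinvariant_def
  proof (intro conjI ballI)
    show "epi A c" using coker_epi c .
    fix h assume "h \<in> hom A (Dm A c) (Dm A c)"
    hence hh: "h \<in> hom A M M" using ch by (simp add: hom_def)
    define p where "p = t \<cdot> c"
    have ph: "p \<in> hom A M M" unfolding p_def using comp_hom t ch by blast
    obtain \<pi> where pi: "\<pi> \<in> hom A F F" "p \<cdot> i = i \<cdot> \<pi>" using FI ph by blast
    obtain \<gamma> where ga: "\<gamma> \<in> hom A F F" "g \<cdot> i = i \<cdot> \<gamma>" using FI gh by blast
    obtain \<alpha> where al: "\<alpha> \<in> hom A F F" "h \<cdot> i = i \<cdot> \<alpha>" using FI hh by blast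
    note Epi = ext_eq[OF pi(2)[symmetric] pi(1) ih ih ph]
    note Eh = ext_eq[OF al(2) ih hh al(1) ih]
    have "i \<cdot> (\<pi> \<cdot> \<pi>) = i \<cdot> \<pi>"
      using pi(1) ih ph t(1) ch(1) by (simp add: AS Epi pi(2)[symmetric] p_def Ect)
    hence pp: "\<pi> \<cdot> \<pi> = \<pi>" using mono_cancel[OF mi] comp_hom pi(1) ih by (metis hom_iff)
    have "i \<cdot> (\<pi> \<cdot> \<gamma>) = t \<cdot> (c \<cdot> (g \<cdot> i))"
      using pi(1) ga(1) ih ph t(1) ch(1) gh by (simp add: AS Epi pi(2)[symmetric] ga(2)[symmetric] p_def)
    also have "\<dots> = zerom A F M" using ch(2) comp_zero[OF t(1) Ob(2)] by simp
    also have "\<dots> = i \<cdot> zerom A F F" using comp_zero[OF ih Ob(2)] by simp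
    finally have pg: "\<pi> \<cdot> \<gamma> = zerom A F F" using mono_cancel[OF mi] comp_hom pi(1) ga(1) ih zero_hom Ob by (metis hom_iff)
    have ci: "(c \<cdot> i) \<cdot> \<pi> = c \<cdot> i"
      using pi(1) ih ph t(1) ch(1) by (simp add: AS Epi pi(2)[symmetric] p_def Ect)
    have cen: "\<pi> \<cdot> \<alpha> = \<alpha> \<cdot> \<pi>" using ab pi al pp unfolding abelian_End_def by blast
    note Ecen = ext_eq[OF cen al(1) pi(1) pi(1) al(1)]
    have cih: "c \<cdot> i \<in> hom A F Q" using comp_hom ih ch by blast
    have "(c \<cdot> h) \<cdot> (g \<cdot> i) = (c \<cdot> i) \<cdot> (\<alpha> \<cdot> \<gamma>)"
      using ch(1) hh gh ih al(1) ga(1) by (simp add: AS ga(2) Eh)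
    also have "\<dots> = ((c \<cdot> i) \<cdot> \<pi>) \<cdot> (\<alpha> \<cdot> \<gamma>)" by (simp only: ci)
    also have "\<dots> = (c \<cdot> i) \<cdot> (\<alpha> \<cdot> (\<pi> \<cdot> \<gamma>))"
      using cih pi(1) al(1) ga(1) by (simp add: AS Ecen)
    also have "\<dots> = zerom A F Q"
      using pg comp_zero[OF al(1) Ob(2)] comp_zero[OF cih Ob(2)] by simp
    finally have z: "(c \<cdot> h) \<cdot> (g \<cdot> i) = zerom A F Q" .
    have chh: "c \<cdot> h \<in> hom A (Cd A (g \<cdot> i)) Q" using comp_hom hh ch gi by (simp add: hom_def)
    obtain \<beta> where "\<beta> \<in> hom A (Cd A c) Q" "\<beta> \<cdot> c = c \<cdot> h"
      using coker_factor[OF c chh] z gi by (auto simp: hom_def)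
    thus "\<exists>\<beta>\<in>hom A (Cd A c) (Cd A c). c \<cdot> h = \<beta> \<cdot> c" unfolding Q_def by metis
  qed
qed

lemma key2:
  assumes ih: "i \<in> hom A F M" and rh: "r \<in> hom A M F" and ri: "r \<cdot> i = idm A F"
    and H: "\<forall>g\<in>hom A M M. \<forall>c. is_cokernel A (g \<cdot> i) c \<longrightarrow> fully_coinvariant A c"
    and CE: "\<forall>f\<in>Ar A. \<exists>c. is_cokernel A f c"
    and a: "a \<in> hom A F F" and b: "b \<in> hom A F F" and f: "f \<in> hom A F F"
    and ab: "a \<cdot> b = zerom A F F"
  shows "a \<cdot> f \<cdot> b = zerom A F F"
proof -
  have Ob: "M \<in> Ob A" "F \<in> Ob A" using hom_Ob ih by auto
  note Eri = ext_id[OF ri ih rh]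
  define g where "g = i \<cdot> b \<cdot> r"
  have gh: "g \<in> hom A M M" unfolding g_def using comp_hom ih rh b by blast
  have gi: "g \<cdot> i = i \<cdot> b" unfolding g_def using ih rh b by (simp add: AS ri id_right[OF b])
  have ib: "i \<cdot> b \<in> hom A F M" using comp_hom ih b by blast
  have ibA: "i \<cdot> b \<in> Ar A" using ib by (simp add: hom_def)
  obtain c where c: "is_cokernel A (i \<cdot> b) c" using CE ibA by blast
  define Q where "Q = Cd A c"
  have ch: "c \<in> hom A M Q" "c \<cdot> (i \<cdot> b) = zerom A F Q" using coker_hom[OF c] ib unfolding Q_def by (auto simp: hom_def)
  have fc: "fully_coinvariant A c" using H[rule_format, OF gh, of c] c gi by simp
  define h where "h = i \<cdot> f \<cdot> r"
  have hh: "h \<in> hom A M M" unfolding h_def using comp_hom ih rh f by blast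
  have Dmc: "Dm A c = M" using ch by (simp add: hom_def)
  obtain \<beta> where be: "\<beta> \<in> hom A Q Q" "c \<cdot> h = \<beta> \<cdot> c"
    using fc hh Dmc unfolding fully_coinvariant_def Q_def by auto
  have ar: "a \<cdot> r \<in> hom A (Cd A (i \<cdot> b)) F" using comp_hom a rh ib by (simp add: hom_def)
  have "(a \<cdot> r) \<cdot> (i \<cdot> b) = zerom A (Dm A (i \<cdot> b)) F"
    using a rh ih b ib by (simp add: AS Eri ab)
  then obtain u where u: "u \<in> hom A Q F" "u \<cdot> c = a \<cdot> r"
    using coker_factor[OF c ar] unfolding Q_def by blast
  note Eu = ext_eq[OF u(2) ch(1) u(1) rh a]
  note Eb = ext_eq[OF be(2) hh ch(1) ch(1) be(1)]
  have "a \<cdot> f \<cdot> b = u \<cdot> c \<cdot> h \<cdot> i \<cdot> b"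
    using a f b ih rh u(1) ch(1) by (simp add: AS h_def Eu Eri)
  also have "\<dots> = u \<cdot> \<beta> \<cdot> c \<cdot> i \<cdot> b"
    using ib hh by (simp add: AS Eb)
  also have "\<dots> = zerom A F F"
    using ch(2) comp_zero[OF be(1) Ob(2)] comp_zero[OF u(1) Ob(2)] by simp
  finally show ?thesis .
qed

end

theorem theorem4p10:
  fixes A :: "('o, 'm) precat" and i d :: 'm
  assumes "abelian_category A"
    and "fully_invariant_ses A i d"
  shows "(strongly_self_F_split A i d \<longleftrightarrow>
            self_F_split A i d \<and> abelian_End A (Cd A d)) \<and>
         (dual_strongly_self_F_split A i d \<longleftrightarrow>
            dual_self_F_split A i d \<and> abelian_End A (Dm A i))"
proof -
  have cat: "is_category A" and pre: "is_preadditive A"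
    and KE: "\<forall>f\<in>Ar A. \<exists>k. is_kernel A f k" and CE: "\<forall>f\<in>Ar A. \<exists>c. is_cokernel A f c"
    using assms(1) unfolding abelian_category_def by auto
  interpret pc A using cat pre by unfold_locales
  have mi: "mono A i" and ep: "epi A d" and iM: "Cd A i = Dm A d" and ker: "is_kernel A d i"
    and cok: "is_cokernel A i d" and fi: "fully_invariant A i"
    using assms(2) unfolding fully_invariant_ses_def short_exact_def by auto
  define F where "F = Dm A i"
  define M where "M = Cd A i"
  define C where "C = Cd A d"
  have ih: "i \<in> hom A F M" using mi unfolding F_def M_def mono_def hom_def by auto
  have dh: "d \<in> hom A M C" using ep iM unfolding C_def M_def epi_def hom_def by auto
  have Ob: "F \<in> Ob A" "M \<in> Ob A" "C \<in> Ob A" using hom_Ob ih dh by auto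
  have di: "d \<cdot> i = zerom A F C" using ker unfolding is_kernel_def F_def C_def by auto
  have FI: "\<forall>h\<in>hom A M M. \<exists>\<alpha>\<in>hom A F F. h \<cdot> i = i \<cdot> \<alpha>"
    using fi unfolding fully_invariant_def F_def M_def by auto
  have L: "\<forall>h\<in>hom A M M. \<exists>hb\<in>hom A C C. d \<cdot> h = hb \<cdot> d"
  proof
    fix h assume hh: "h \<in> hom A M M"
    then obtain \<alpha> where al: "\<alpha> \<in> hom A F F" "h \<cdot> i = i \<cdot> \<alpha>" using FI by blast
    have "(d \<cdot> h) \<cdot> i = (d \<cdot> i) \<cdot> \<alpha>" using dh hh ih al(1) by (simp add: AS al(2))
    also have "\<dots> = zerom A F C" using di zero_comp[OF al(1) Ob(3)] by simp
    finally have z: "(d \<cdot> h) \<cdot> i = zerom A (Dm A i) C" unfolding F_def .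
    have dhh: "d \<cdot> h \<in> hom A (Cd A i) C" using comp_hom hh dh unfolding M_def by blast
    show "\<exists>hb\<in>hom A C C. d \<cdot> h = hb \<cdot> d" using coker_factor[OF cok dhh z] dh unfolding C_def by metis
  qed
  have part1: "strongly_self_F_split A i d \<longleftrightarrow> self_F_split A i d \<and> abelian_End A C"
  proof
    assume S: "strongly_self_F_split A i d"
    have H: "\<forall>g\<in>hom A M M. \<forall>k. is_kernel A (d \<cdot> g) k \<longrightarrow> fully_invariant A k"
      using S unfolding strongly_self_F_split_def M_def by blast
    show "self_F_split A i d \<and> abelian_End A C"
    proof
      show "self_F_split A i d" using S unfolding strongly_self_F_split_def self_F_split_def by blast
      have "d \<cdot> idm A M = d" using id_right[OF dh] .
      hence "is_section A i" using S id_hom[OF Ob(2)] ker unfolding strongly_self_F_split_def M_def by metis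
      then obtain r where r: "r \<in> hom A M F" "r \<cdot> i = idm A F" unfolding is_section_def F_def M_def by blast
      define p where "p = i \<cdot> r"
      have ph: "p \<in> hom A M M" unfolding p_def using comp_hom r ih by blast
      have pp: "p \<cdot> p = p" unfolding p_def using ih r(1) by (simp add: AS ext_id[OF r(2) ih r(1)])
      obtain p' where p': "p' \<in> hom A M M" "addm A p p' = idm A M" "p' \<cdot> p = zerom A M M"
        using idem_compl[OF ph pp] by blast
      have "p' \<cdot> i = (p' \<cdot> p) \<cdot> i" unfolding p_def using ih r(1) p'(1) by (simp add: AS r(2) id_right[OF ih])
      also have "\<dots> = zerom A F M" using p'(3) zero_comp[OF ih Ob(2)] by simp
      finally have "p' \<cdot> i = zerom A (Dm A i) M" unfolding F_def .
      moreover have "p' \<in> hom A (Cd A i) M" using p'(1) unfolding M_def .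
      ultimately obtain s where s: "s \<in> hom A C M" "s \<cdot> d = p'"
        using coker_factor[OF cok] unfolding C_def by blast
      have "d = d \<cdot> addm A p p'" using p'(2) id_right[OF dh] by simp
      also have "\<dots> = addm A (d \<cdot> p) (d \<cdot> p')" using distl[OF ph p'(1) dh] .
      also have "d \<cdot> p = zerom A M C"
      proof -
        have "d \<cdot> p = (d \<cdot> i) \<cdot> r" unfolding p_def using ih r(1) dh by (simp add: AS)
        thus ?thesis using di zero_comp[OF r(1) Ob(3)] by simp
      qed
      also have "addm A (zerom A M C) (d \<cdot> p') = d \<cdot> p'" using zero_add comp_hom p'(1) dh by blast
      finally have "(d \<cdot> s) \<cdot> d = idm A C \<cdot> d" using id_left[OF dh] s dh by (simp add: AS)
      hence ds: "d \<cdot> s = idm A C" using epi_cancel[OF ep] comp_hom s(1) dh id_hom Ob(3) unfolding C_def by metis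
      show "abelian_End A C" unfolding abelian_End_def
      proof (intro ballI impI)
        fix e f assume e: "e \<in> hom A C C" and ee: "e \<cdot> e = e" and f: "f \<in> hom A C C"
        obtain e' where e': "e' \<in> hom A C C" "addm A e e' = idm A C" "e \<cdot> e' = zerom A C C"
          "e' \<cdot> e = zerom A C C" using idem_compl[OF e ee] by blast
        have 1: "e \<cdot> f \<cdot> e' = zerom A C C" using key1[OF ep dh s(1) ds H KE e e'(1) f e'(3)] .
        have 2: "e' \<cdot> f \<cdot> e = zerom A C C" using key1[OF ep dh s(1) ds H KE e'(1) e f e'(4)] .
        show "e \<cdot> f = f \<cdot> e" using central[OF e e'(1) f e'(2) ee 1 2] .
      qed
    qed
  next
    assume S: "self_F_split A i d \<and> abelian_End A C"
    show "strongly_self_F_split A i d" unfolding strongly_self_F_split_def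
    proof (intro ballI allI impI conjI)
      fix g k assume g: "g \<in> hom A (Cd A i) (Cd A i)" and k: "is_kernel A (d \<cdot> g) k"
      show sec: "is_section A k" using S g k unfolding self_F_split_def by blast
      show "fully_invariant A k" using conv1[OF dh ep L _ _ k sec] S g unfolding M_def by blast
    qed
  qed
  have part2: "dual_strongly_self_F_split A i d \<longleftrightarrow> dual_self_F_split A i d \<and> abelian_End A F"
  proof
    assume S: "dual_strongly_self_F_split A i d"
    have H: "\<forall>g\<in>hom A M M. \<forall>c. is_cokernel A (g \<cdot> i) c \<longrightarrow> fully_coinvariant A c"
      using S unfolding dual_strongly_self_F_split_def M_def by blast
    show "dual_self_F_split A i d \<and> abelian_End A F"
    proof
      show "dual_self_F_split A i d" using S unfolding dual_strongly_self_F_split_def dual_self_F_split_def by blast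
      have "idm A M \<cdot> i = i" using id_left[OF ih] .
      hence "is_retraction A d" using S id_hom[OF Ob(2)] cok unfolding dual_strongly_self_F_split_def M_def by metis
      then obtain t where t: "t \<in> hom A C M" "d \<cdot> t = idm A C" using iM unfolding is_retraction_def C_def M_def by auto
      note Edt = ext_id[OF t(2) t(1) dh]
      define p where "p = t \<cdot> d"
      have ph: "p \<in> hom A M M" unfolding p_def using comp_hom t dh by blast
      have pp: "p \<cdot> p = p" unfolding p_def using dh t(1) by (simp add: AS Edt)
      obtain p' where p': "p' \<in> hom A M M" "addm A p p' = idm A M" "p \<cdot> p' = zerom A M M"
        using idem_compl[OF ph pp] by blast
      have "d \<cdot> p' = d \<cdot> (p \<cdot> p')" unfolding p_def using dh t(1) p'(1) by (simp add: AS Edt)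
      also have "\<dots> = zerom A M C" using p'(3) comp_zero[OF dh Ob(2)] by simp
      finally have "d \<cdot> p' = zerom A M (Cd A d)" unfolding C_def .
      moreover have "p' \<in> hom A M (Dm A d)" using p'(1) iM unfolding M_def by simp
      ultimately obtain r where r: "r \<in> hom A M F" "i \<cdot> r = p'"
        using ker_factor[OF ker] unfolding F_def by blast
      have "i = addm A p p' \<cdot> i" using p'(2) id_left[OF ih] by simp
      also have "\<dots> = addm A (p \<cdot> i) (p' \<cdot> i)" using distr[OF ph p'(1) ih] .
      also have "p \<cdot> i = zerom A F M" unfolding p_def using ih t(1) dh
        by (simp add: AS di comp_zero[OF t(1) Ob(1)])
      also have "addm A (zerom A F M) (p' \<cdot> i) = p' \<cdot> i" using zero_add comp_hom p'(1) ih by blast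
      finally have ip: "i = p' \<cdot> i" .
      have "i \<cdot> (r \<cdot> i) = (i \<cdot> r) \<cdot> i" using r(1) ih by (simp add: AS)
      also have "\<dots> = i" using r(2) ip by simp
      finally have "i \<cdot> (r \<cdot> i) = i \<cdot> idm A F" using id_right[OF ih] by simp
      hence ri: "r \<cdot> i = idm A F" using mono_cancel[OF mi] comp_hom r(1) ih id_hom Ob(1) unfolding F_def by metis
      show "abelian_End A F" unfolding abelian_End_def
      proof (intro ballI impI)
        fix e f assume e: "e \<in> hom A F F" and ee: "e \<cdot> e = e" and f: "f \<in> hom A F F"
        obtain e' where e': "e' \<in> hom A F F" "addm A e e' = idm A F" "e \<cdot> e' = zerom A F F"
          "e' \<cdot> e = zerom A F F" using idem_compl[OF e ee] by blast
        have 1: "e \<cdot> f \<cdot> e' = zerom A F F" using key2[OF ih r(1) ri H CE e e'(1) f e'(3)] .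
        have 2: "e' \<cdot> f \<cdot> e = zerom A F F" using key2[OF ih r(1) ri H CE e'(1) e f e'(4)] .
        show "e \<cdot> f = f \<cdot> e" using central[OF e e'(1) f e'(2) ee 1 2] .
      qed
    qed
  next
    assume S: "dual_self_F_split A i d \<and> abelian_End A F"
    show "dual_strongly_self_F_split A i d" unfolding dual_strongly_self_F_split_def
    proof (intro ballI allI impI conjI)
      fix g c assume g: "g \<in> hom A (Cd A i) (Cd A i)" and c: "is_cokernel A (g \<cdot> i) c"
      show ret: "is_retraction A c" using S g c unfolding dual_self_F_split_def by blast
      show "fully_coinvariant A c" using conv2[OF ih mi FI _ _ c ret] S g unfolding M_def by blast
    qed
  qed
  show ?thesis using part1 part2 unfolding C_def F_def by blast
qed

end
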